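(* Let $m\ge 2$ be an integer, and let $P_n\in\mathbb{R}^{m}$ and $P_n^k\in\mathbb{R}^{m}$ be arbitrary vectors (the latter a fixed linearization point), with components $P_{n,j}$ and $P^k_{n,j}$. For $i\in\{1,\dots,m\}$ define the softmax component $$R_{n,i}(P_n)=\frac{\exp(P_{n,i})}{\sum_{j=1}^{m}\exp(P_{n,j})},$$ and the log-sum-exp function $\mathrm{LSE}(P_n)=\ln\Bigl(\sum_{j=1}^{m}\exp(P_{n,j})\Bigr)$. Let $\exp(P_n^k)$ denote the vector with components $\exp(P^k_{n,j})$, and define $$\underline{R}_{n,i}(P_n)=1-\sum_{j\neq i}^{m}\exp(P_{n,j})\,\exp\Bigl\{-\mathrm{LSE}(P_n^k)-\Bigl[\frac{\exp(P_n^k)}{\sum_{j=1}^{m}\exp(P^k_{n,j})}\Bigr]^{\top}(P_n-P_n^k)\Bigr\}.$$ Then for all $P_n\in\mathbb{R}^{m}$ we have $R_{n,i}(P_n)\ge \underline{R}_{n,i}(P_n)$, and moreover $\underline{R}_{n,i}$ is a concave function of $P_n$.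
   Context: Here $P_n$ plays the role of the $n$th row of a matrix $P\in\mathbb{R}^{m\times m}$ to which the softmax function is applied row-wise, and $P_n^k$ is the corresponding row of a fixed matrix $P^k$ (a linearization point). The sum $\sum_{j\neq i}^{m}$ means the sum over $j\in\{1,\dots,m\}\setminus\{i\}$. *)

theory Defs
  imports "HOL-Analysis.Analysis"
begin

text \<open>Vectors in R^m are modelled as real^'m for a finite index type 'm with CARD('m) = m.\<close>

definition softmax :: "real^'m \<Rightarrow> 'm \<Rightarrow> real" where
  "softmax P i = exp (P $ i) / (\<Sum>j\<in>UNIV. exp (P $ j))"

definition LSE :: "real^'m \<Rightarrow> real" where
  "LSE P = ln (\<Sum>j\<in>UNIV. exp (P $ j))"

definition softmax_lower :: "real^'m \<Rightarrow> 'm \<Rightarrow> real^'m \<Rightarrow> real" where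
  "softmax_lower Pk i P =
     1 - (\<Sum>j\<in>UNIV - {i}. exp (P $ j) *
            exp (- LSE Pk
                 - (\<chi> j. exp (Pk $ j) / (\<Sum>l\<in>UNIV. exp (Pk $ l))) \<bullet> (P - Pk)))"

end

theory Submission
  imports Defs
begin

lemma lse_tangent:
  fixes Pk P :: "real^'m"
  defines "K \<equiv> (\<Sum>l\<in>UNIV. exp (Pk $ l))"
  defines "w \<equiv> (\<chi> j. exp (Pk $ j) / K)"
  shows "K * exp (w \<bullet> (P - Pk)) \<le> (\<Sum>j\<in>UNIV. exp (P $ j))"
proof -
  have Kpos: "K > 0" unfolding K_def by (intro sum_pos) auto
  define d where "d j = P $ j - Pk $ j" for j
  define c where "c = w \<bullet> (P - Pk)"
  have c_eq: "c = (\<Sum>j\<in>UNIV. exp (Pk $ j) / K * d j)"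
    unfolding c_def w_def d_def inner_vec_def by simp
  have wsum: "(\<Sum>j\<in>UNIV. exp (Pk $ j) / K) = 1"
    using Kpos unfolding K_def by (simp add: sum_divide_distrib[symmetric])
  have "(\<Sum>j\<in>UNIV. exp (Pk $ j) / K * (1 + (d j - c))) \<le>
        (\<Sum>j\<in>UNIV. exp (Pk $ j) / K * exp (d j - c))"
    apply (intro sum_mono mult_left_mono)
    using Kpos by (auto simp: exp_ge_add_one_self_aux)
  moreover have "(\<Sum>j\<in>UNIV. exp (Pk $ j) / K * (1 + (d j - c))) = 1"
  proof -
    have "(\<Sum>j\<in>UNIV. exp (Pk $ j) / K * (1 + (d j - c))) =
      (\<Sum>j\<in>UNIV. exp (Pk $ j) / K) + (\<Sum>j\<in>UNIV. exp (Pk $ j) / K * d j)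
       - (\<Sum>j\<in>UNIV. exp (Pk $ j) / K) * c"
      by (simp add: distrib_left right_diff_distrib sum.distrib sum_subtractf sum_distrib_right)
    then show ?thesis using wsum c_eq by simp
  qed
  moreover have "(\<Sum>j\<in>UNIV. exp (Pk $ j) / K * exp (d j - c)) =
        (\<Sum>j\<in>UNIV. exp (P $ j)) / (K * exp c)"
    unfolding sum_divide_distrib
    by (intro sum.cong refl) (simp add: d_def exp_diff exp_add)
  ultimately have "1 \<le> (\<Sum>j\<in>UNIV. exp (P $ j)) / (K * exp c)" by simp
  then show ?thesis using Kpos by (simp add: c_def pos_le_divide_eq)
qed

theorem lemma1:
  fixes Pk :: "real^'m" and i :: 'm
  assumes "CARD('m) \<ge> 2"
  shows "(\<forall>P :: real^'m. softmax P i \<ge> softmax_lower Pk i P)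
         \<and> concave_on UNIV (softmax_lower Pk i)"
proof
  define K where "K = (\<Sum>l\<in>UNIV. exp (Pk $ l))"
  define w where "w = (\<chi> j. exp (Pk $ j) / K)"
  have Kpos: "K > 0" unfolding K_def by (intro sum_pos) auto
  have sl: "softmax_lower Pk i P = 1 - (\<Sum>j\<in>UNIV - {i}. exp (P $ j) *
            exp (- LSE Pk - w \<bullet> (P - Pk)))" for P
    unfolding softmax_lower_def w_def K_def ..
  show "\<forall>P :: real^'m. softmax P i \<ge> softmax_lower Pk i P"
  proof
    fix P :: "real^'m"
    define S where "S = (\<Sum>j\<in>UNIV. exp (P $ j))"
    have Spos: "S > 0" unfolding S_def by (intro sum_pos) auto
    have tan: "K * exp (w \<bullet> (P - Pk)) \<le> S"
      using lse_tangent[of Pk P] unfolding K_def w_def S_def by simp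
    have E: "exp (- LSE Pk - w \<bullet> (P - Pk)) = 1 / (K * exp (w \<bullet> (P - Pk)))"
      using Kpos by (simp add: LSE_def K_def[symmetric] exp_diff exp_minus field_simps)
    have Ege: "1 / S \<le> exp (- LSE Pk - w \<bullet> (P - Pk))"
      unfolding E using tan Kpos Spos by (intro divide_left_mono) auto
    have Ssplit: "S = exp (P $ i) + (\<Sum>j\<in>UNIV - {i}. exp (P $ j))"
      unfolding S_def by (simp add: sum.remove[of UNIV i])
    have sm: "softmax P i = 1 - (\<Sum>j\<in>UNIV - {i}. exp (P $ j)) / S"
      unfolding softmax_def S_def[symmetric] using Spos Ssplit by (simp add: field_simps)
    have "(\<Sum>j\<in>UNIV - {i}. exp (P $ j)) / S =
               (\<Sum>j\<in>UNIV - {i}. exp (P $ j) * (1 / S))"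
      by (simp add: sum_divide_distrib)
    also have "\<dots> \<le> (\<Sum>j\<in>UNIV - {i}. exp (P $ j) * exp (- LSE Pk - w \<bullet> (P - Pk)))"
      by (intro sum_mono mult_left_mono Ege) auto
    finally show "softmax P i \<ge> softmax_lower Pk i P" unfolding sl sm by linarith
  qed
next
  define K where "K = (\<Sum>l\<in>UNIV. exp (Pk $ l))"
  define w where "w = (\<chi> j. exp (Pk $ j) / K)"
  define L where "L j P = P $ j - LSE Pk - w \<bullet> (P - Pk)" for j and P :: "real^'m"
  have sl: "softmax_lower Pk i P = 1 - (\<Sum>j\<in>UNIV - {i}. exp (L j P))" for P
    unfolding softmax_lower_def w_def K_def L_def by (intro arg_cong2[where f="(-)"] refl sum.cong) (simp_all only: exp_add[symmetric] diff_conv_add_uminus add.assoc)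
  have Llin: "L j (u *\<^sub>R x + v *\<^sub>R y) = u * L j x + v * L j y"
    if "u + v = 1" for j u v x y
  proof -
    have "u *\<^sub>R x + v *\<^sub>R y - Pk = u *\<^sub>R (x - Pk) + v *\<^sub>R (y - Pk)"
      using that by (simp add: algebra_simps scaleR_left_distrib[symmetric])
    then have 2: "w \<bullet> (u *\<^sub>R x + v *\<^sub>R y - Pk) = u * (w \<bullet> (x - Pk)) + v * (w \<bullet> (y - Pk))"
      by (simp add: inner_add_right)
    have 1: "(u *\<^sub>R x + v *\<^sub>R y) $ j = u * x $ j + v * y $ j" by simp
    have v: "v = 1 - u" using that by simp
    show ?thesis unfolding L_def 1 2 v by (simp add: algebra_simps)
  qed
  have cvx: "exp (u * a + v * b) \<le> u * exp a + v * exp b"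
    if "u \<ge> 0" "v \<ge> 0" "u + v = 1" for u v a b :: real
    using exp_convex that unfolding convex_on_def by auto
  show "concave_on UNIV (softmax_lower Pk i)"
    unfolding concave_on_iff sl
  proof (intro conjI ballI allI impI)
    fix x y :: "real^'m" and u v :: real
    assume uv: "u \<ge> 0" "v \<ge> 0" "u + v = 1"
    have "(\<Sum>j\<in>UNIV - {i}. exp (L j (u *\<^sub>R x + v *\<^sub>R y))) \<le>
          (\<Sum>j\<in>UNIV - {i}. u * exp (L j x) + v * exp (L j y))"
      by (intro sum_mono) (simp add: Llin uv cvx)
    also have "\<dots> = u * (\<Sum>j\<in>UNIV - {i}. exp (L j x)) + v * (\<Sum>j\<in>UNIV - {i}. exp (L j y))"
      by (simp add: sum.distrib sum_distrib_left)
    finally show "u * (1 - (\<Sum>j\<in>UNIV - {i}. exp (L j x))) + v * (1 - (\<Sum>j\<in>UNIV - {i}. exp (L j y)))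
      \<le> 1 - (\<Sum>j\<in>UNIV - {i}. exp (L j (u *\<^sub>R x + v *\<^sub>R y)))"
      using uv by (simp add: algebra_simps)
  qed simp
qed

end
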